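(* Let $1\le p<\infty$ and $\alpha>0$, and consider the differentiation operator $Df=f'$ on $\mathcal{F}^p_{(\alpha,1)}$ (where it is bounded). Then the closed disc $\{\lambda\in\mathbb{C}:|\lambda|\le\alpha\}$ is contained in the spectrum $\sigma(D)$ of $D$ on $\mathcal{F}^p_{(\alpha,1)}$.
   Context: For $\alpha>0$, $m>0$ and $1\le p<\infty$, $\mathcal{F}^p_{(\alpha,m)}$ denotes the Banach space of entire functions $f$ on $\mathbb{C}$ with $\|f\|_{(p,\alpha,m)}^p=\int_{\mathbb{C}}|f(z)|^pe^{-p\alpha|z|^m}\,dA(z)<\infty$, where $dA$ is Lebesgue area measure. *)

theory Defs
  imports "HOL-Analysis.Analysis"
begin

definition fock_space :: "real \<Rightarrow> real \<Rightarrow> real \<Rightarrow> (complex \<Rightarrow> complex) set" where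
  "fock_space p \<alpha> m = {f. f holomorphic_on UNIV \<and>
     integrable lborel (\<lambda>z. cmod (f z) powr p * exp (- p * \<alpha> * cmod z powr m))}"

definition fock_norm :: "real \<Rightarrow> real \<Rightarrow> real \<Rightarrow> (complex \<Rightarrow> complex) \<Rightarrow> real" where
  "fock_norm p \<alpha> m f =
     (LINT z|lborel. cmod (f z) powr p * exp (- p * \<alpha> * cmod z powr m)) powr (1 / p)"

definition op_spectrum ::
  "(complex \<Rightarrow> complex) set \<Rightarrow> ((complex \<Rightarrow> complex) \<Rightarrow> real)
     \<Rightarrow> ((complex \<Rightarrow> complex) \<Rightarrow> (complex \<Rightarrow> complex)) \<Rightarrow> complex set" where
  "op_spectrum X N T = {w. \<not> (\<exists>S.
      (\<forall>f\<in>X. S f \<in> X) \<and>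
      (\<forall>f\<in>X. \<forall>g\<in>X. \<forall>a b. S (\<lambda>z. a * f z + b * g z) = (\<lambda>z. a * S f z + b * S g z)) \<and>
      (\<exists>C. \<forall>f\<in>X. N (S f) \<le> C * N f) \<and>
      (\<forall>f\<in>X. (\<lambda>z. T (S f) z - w * S f z) = f) \<and>
      (\<forall>f\<in>X. S (\<lambda>z. T f z - w * f z) = f))}"

end

theory Submission
  imports Defs "HOL-Probability.Sinc_Integral"
begin

lemma int_exp_abs:
  fixes k :: real assumes k: "k > 0"
  shows "integrable lborel (\<lambda>x::real. exp (- k * \<bar>x\<bar>))"
proof -
  have i1: "integrable lborel (\<lambda>x::real. indicator {0<..} x * exp (-(x * k)))"
    using integrable_I0i_exp_mscale[OF k] by (simp add: set_integrable_def mult.commute)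
  have i2: "integrable lborel (\<lambda>x::real. indicator {0<..} (-x) * exp (-((-x) * k)))"
    using lborel_integrable_real_affine_iff[of "-1" "\<lambda>x. indicator {0<..} x * exp (-(x * k))" 0] i1
    by simp
  have i3: "integrable lborel (\<lambda>x::real. indicator {-1..1} x :: real)"
    by (simp add: integrable_indicator_iff emeasure_lborel_cbox_eq)
  have "integrable lborel (\<lambda>x::real. indicator {0<..} x * exp (-(x * k)) + indicator {0<..} (-x) * exp (-((-x) * k)) + indicator {-1..1} x)"
    using i1 i2 i3 by auto
  moreover have "AE x in lborel. norm (exp (- k * \<bar>x\<bar>)) \<le> norm (indicator {0<..} x * exp (-(x * k)) + indicator {0<..} (-x) * exp (-((-x) * k)) + indicator {-1..1} x :: real)"
  proof (rule AE_I2)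
    fix x :: real
    consider "x > 0" | "x < 0" | "x = 0" by linarith
    then show "norm (exp (- k * \<bar>x\<bar>)) \<le> norm (indicator {0<..} x * exp (-(x * k)) + indicator {0<..} (-x) * exp (-((-x) * k)) + indicator {-1..1} x :: real)"
    proof cases
      case 1 then show ?thesis by (simp add: indicator_def mult.commute)
    next
      case 2 then show ?thesis by (simp add: indicator_def mult.commute)
    qed simp
  qed
  moreover have "(\<lambda>x::real. exp (- k * \<bar>x\<bar>)) \<in> borel_measurable lborel" by measurable
  ultimately show ?thesis
    using Bochner_Integration.integrable_bound by blast
qed

lemma int_exp_norm:
  fixes c :: real assumes c: "c > 0"
  shows "integrable lborel (\<lambda>z::'a::euclidean_space. exp (- c * norm z))"
proof -
  define k where "k = c / real DIM('a)"
  have k: "k > 0" using c by (simp add: k_def)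
  interpret product_sigma_finite "\<lambda>_. lborel" by standard
  have "integrable (Pi\<^sub>M Basis (\<lambda>_. lborel)) (\<lambda>x. \<Prod>b\<in>Basis. exp (- k * \<bar>x b\<bar>))"
    using int_exp_abs[OF k] by (intro product_integrable_prod) auto
  then have "integrable (distr (Pi\<^sub>M Basis (\<lambda>_. lborel)) borel (\<lambda>f. \<Sum>b\<in>Basis. f b *\<^sub>R b))
      (\<lambda>z::'a. \<Prod>b\<in>Basis. exp (- k * \<bar>z \<bullet> b\<bar>))"
  proof -
    have eq: "(\<Prod>b\<in>Basis. exp (- k * \<bar>(\<Sum>b'\<in>Basis. f b' *\<^sub>R b') \<bullet> b\<bar>)) = (\<Prod>b\<in>Basis. exp (- k * \<bar>f b\<bar>))" for f :: "'a \<Rightarrow> real"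
    proof (rule prod.cong[OF refl])
      fix b :: 'a assume b: "b \<in> Basis"
      have "(\<Sum>b'\<in>Basis. f b' *\<^sub>R b') \<bullet> b = (\<Sum>b'\<in>Basis. f b' * (b' \<bullet> b))"
        by (simp add: inner_sum_left)
      also have "\<dots> = (\<Sum>b'\<in>Basis. if b' = b then f b else 0)"
        by (rule sum.cong[OF refl]) (simp add: inner_Basis b)
      also have "\<dots> = f b" using b by simp
      finally show "exp (- k * \<bar>(\<Sum>b'\<in>Basis. f b' *\<^sub>R b') \<bullet> b\<bar>) = exp (- k * \<bar>f b\<bar>)" by simp
    qed
    have m1: "(\<lambda>f. \<Sum>b\<in>Basis. f b *\<^sub>R b) \<in> measurable (Pi\<^sub>M Basis (\<lambda>_. lborel)) (borel :: 'a measure)"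
      by measurable
    have m2: "(\<lambda>z::'a. \<Prod>b\<in>Basis. exp (- k * \<bar>z \<bullet> b\<bar>)) \<in> borel_measurable borel"
      by measurable
    show ?thesis
      unfolding integrable_distr_eq[OF m1 m2] eq using \<open>integrable _ _\<close> .
  qed
  then have I: "integrable lborel (\<lambda>z::'a. \<Prod>b\<in>Basis. exp (- k * \<bar>z \<bullet> b\<bar>))"
    by (simp add: lborel_eq[symmetric])
  have pw: "norm (exp (- c * norm z)) \<le> norm (\<Prod>b\<in>Basis. exp (- k * \<bar>z \<bullet> b\<bar>))" for z :: 'a
    proof -
      have nn: "norm z \<ge> 0" by simp
      have "(\<Prod>b\<in>Basis. exp (- k * \<bar>z \<bullet> b\<bar>)) = exp (\<Sum>b\<in>Basis. - k * \<bar>z \<bullet> b\<bar>)"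
        by (simp add: exp_sum)
      moreover have "(\<Sum>b\<in>Basis. - k * \<bar>z \<bullet> b\<bar>) \<ge> - c * norm z"
      proof -
        have "(\<Sum>b\<in>Basis. k * \<bar>z \<bullet> b\<bar>) \<le> (\<Sum>b\<in>(Basis::'a set). k * norm z)"
          by (intro sum_mono mult_left_mono) (auto simp: Basis_le_norm k less_imp_le)
        also have "\<dots> = c * norm z" by (simp add: k_def)
        finally show ?thesis by (simp add: sum_negf)
      qed
      ultimately show ?thesis
        by (simp add: prod_nonneg)
    qed
  then have AE: "AE z::'a in lborel. norm (exp (- c * norm z)) \<le> norm (\<Prod>b\<in>Basis. exp (- k * \<bar>z \<bullet> b\<bar>))"
    by (intro AE_I2) (rule pw)
  have M: "(\<lambda>z::'a. exp (- c * norm z)) \<in> borel_measurable lborel" by measurable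
  show ?thesis
    by (rule Bochner_Integration.integrable_bound[OF I M AE])
qed
lemma fock_norm_scale:
  assumes p: "p > 0"
  shows "fock_norm p \<alpha> m (\<lambda>z. c * g z) = cmod c * fock_norm p \<alpha> m g"
proof -
  have "(LINT z|lborel. cmod (c * g z) powr p * exp (- p * \<alpha> * cmod z powr m))
      = (LINT z|lborel. cmod c powr p * (cmod (g z) powr p * exp (- p * \<alpha> * cmod z powr m)))"
    by (simp add: norm_mult powr_mult mult.assoc)
  also have "\<dots> = cmod c powr p * (LINT z|lborel. cmod (g z) powr p * exp (- p * \<alpha> * cmod z powr m))"
    by (rule integral_mult_right_zero)
  finally have eq: "(LINT z|lborel. cmod (c * g z) powr p * exp (- p * \<alpha> * cmod z powr m))
      = cmod c powr p * (LINT z|lborel. cmod (g z) powr p * exp (- p * \<alpha> * cmod z powr m))" .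
  have nn: "0 \<le> (LINT z|lborel. cmod (g z) powr p * exp (- p * \<alpha> * cmod z powr m))"
    by (rule Bochner_Integration.integral_nonneg) simp
  have "(cmod c powr p) powr (1/p) = cmod c"
    using p by (simp add: powr_powr)
  then show ?thesis
    unfolding fock_norm_def eq using nn by (simp add: powr_mult)
qed

lemma exp_in_fock:
  assumes p: "p \<ge> 1" and v: "cmod v < \<alpha>"
  shows "(\<lambda>z. exp (v * z)) \<in> fock_space p \<alpha> 1"
proof -
  have eq: "cmod (exp (v * z)) powr p * exp (- p * \<alpha> * cmod z powr 1) = exp (p * Re (v * z) - p * \<alpha> * cmod z)" for z
  proof -
    have "cmod (exp (v * z)) = exp (Re (v * z))" by (rule norm_exp_eq_Re)
    then have "cmod (exp (v * z)) powr p = exp (p * Re (v * z))" by (simp add: powr_def mult.commute)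
    then show ?thesis by (simp add: exp_add[symmetric] algebra_simps)
  qed
  have I: "integrable lborel (\<lambda>z::complex. exp (- (p * (\<alpha> - cmod v)) * norm z))"
    using p v by (intro int_exp_norm) auto
  have bd: "norm (exp (p * Re (v * z) - p * \<alpha> * cmod z)) \<le> norm (exp (- (p * (\<alpha> - cmod v)) * norm z))" for z
  proof -
    have "Re (v * z) \<le> cmod v * cmod z"
      by (metis complex_Re_le_cmod norm_mult)
    then have "p * Re (v * z) \<le> p * (cmod v * cmod z)" using p by (intro mult_left_mono) auto
    then show ?thesis by (simp add: algebra_simps)
  qed
  have M: "(\<lambda>z. exp (p * Re (v * z) - p * \<alpha> * cmod z)) \<in> borel_measurable lborel"
    by measurable
  have "integrable lborel (\<lambda>z. exp (p * Re (v * z) - p * \<alpha> * cmod z))"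
    using Bochner_Integration.integrable_bound[OF I M] bd by auto
  then have "integrable lborel (\<lambda>z. cmod (exp (v * z)) powr p * exp (- p * \<alpha> * cmod z powr 1))"
    unfolding eq .
  then show ?thesis
    unfolding fock_space_def by (auto intro!: holomorphic_intros)
qed

lemma exp_norm_pos:
  assumes p: "p \<ge> 1" and v: "cmod v < \<alpha>"
  shows "fock_norm p \<alpha> 1 (\<lambda>z. exp (v * z)) > 0"
proof -
  define g where "g = (\<lambda>z. cmod (exp (v * z)) powr p * exp (- p * \<alpha> * cmod z powr 1))"
  have int: "integrable lborel g"
    using exp_in_fock[OF p v] by (simp add: fock_space_def g_def)
  have pos: "g z > 0" for z by (simp add: g_def)
  have nn: "0 \<le> integral\<^sup>L lborel g"
    using pos by (intro Bochner_Integration.integral_nonneg) (simp add: less_imp_le)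
  have "integral\<^sup>L lborel g \<noteq> 0"
  proof
    assume "integral\<^sup>L lborel g = 0"
    then have "AE z in lborel. g z = 0"
      using integral_nonneg_eq_0_iff_AE[OF int] pos by (simp add: less_imp_le)
    then have "AE z in (lborel::complex measure). False"
      using pos by (auto elim: AE_mp simp: less_le)
    then show False
      using ae_filter_eq_bot_iff[of "lborel::complex measure"] trivial_limit_def[of "ae_filter (lborel::complex measure)"]
      by simp
  qed
  with nn have "integral\<^sup>L lborel g > 0" by simp
  then show ?thesis unfolding fock_norm_def g_def[symmetric] by simp
qed


theorem mainTheorem3:
  fixes p \<alpha> :: real
  assumes "1 \<le> p" and "\<alpha> > 0"
  shows "cball 0 \<alpha> \<subseteq> op_spectrum (fock_space p \<alpha> 1) (fock_norm p \<alpha> 1) deriv"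
proof
  fix w assume "w \<in> cball (0::complex) \<alpha>"
  then have w: "cmod w \<le> \<alpha>" by simp
  have p: "1 \<le> p" and a: "\<alpha> > 0" using assms by auto
  let ?X = "fock_space p \<alpha> 1" and ?N = "fock_norm p \<alpha> 1"
  show "w \<in> op_spectrum ?X ?N deriv"
    unfolding op_spectrum_def
  proof (clarify)
    fix S C
    assume lin: "\<forall>f\<in>?X. \<forall>g\<in>?X. \<forall>a b. S (\<lambda>z. a * f z + b * g z) = (\<lambda>z. a * S f z + b * S g z)"
      and bd: "\<forall>f\<in>?X. ?N (S f) \<le> C * ?N f"
      and inv: "\<forall>f\<in>?X. S (\<lambda>z. deriv f z - w * f z) = f"
    define C' where "C' = \<bar>C\<bar>"
    define s where "s = 1 - 1 / (2 * (\<alpha> * C' + 1))"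
    have C'0: "C' \<ge> 0" by (simp add: C'_def)
    have den: "2 * (\<alpha> * C' + 1) \<ge> 2" using a C'0 by simp
    have s0: "s \<ge> 1/2" and s1: "s < 1"
      using den unfolding s_def by (auto simp: field_simps)
    define v where "v = complex_of_real s * w"
    have nv: "cmod v = s * cmod w" using s0 by (simp add: v_def norm_mult)
    have v: "cmod v < \<alpha>"
    proof -
      have "s * cmod w \<le> s * \<alpha>" using s0 w by (intro mult_left_mono) auto
      also have "\<dots> < \<alpha>" using s1 a by simp
      finally show ?thesis using nv by simp
    qed
    define f where "f = (\<lambda>z. exp (v * z))"
    have fX: "f \<in> ?X" unfolding f_def by (rule exp_in_fock[OF p v])
    have Nf: "?N f > 0" unfolding f_def by (rule exp_norm_pos[OF p v])
    have df: "deriv f z = v * f z" for z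
      unfolding f_def by (rule DERIV_imp_deriv) (auto intro!: derivative_eq_intros)
    have "(\<lambda>z. deriv f z - w * f z) = (\<lambda>z. (v - w) * f z + 0 * f z)"
      by (auto simp: df algebra_simps)
    then have "f = S (\<lambda>z. (v - w) * f z + 0 * f z)" using inv fX by metis
    also have "\<dots> = (\<lambda>z. (v - w) * S f z + 0 * S f z)" using lin fX by blast
    finally have fS: "f = (\<lambda>z. (v - w) * S f z)" by simp
    have "?N f = cmod (v - w) * ?N (S f)"
      using fock_norm_scale[of p \<alpha> 1 "v - w" "S f"] p fS by simp
    also have "\<dots> \<le> cmod (v - w) * (C' * ?N f)"
    proof (rule mult_left_mono)
      have "?N (S f) \<le> C * ?N f" using bd fX by blast
      also have "\<dots> \<le> C' * ?N f" using Nf by (intro mult_right_mono) (auto simp: C'_def)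
      finally show "?N (S f) \<le> C' * ?N f" .
    qed simp
    also have "\<dots> \<le> (1/2) * ?N f"
    proof -
      have "cmod (v - w) = (1 - s) * cmod w"
      proof -
        have "v - w = complex_of_real (s - 1) * w" by (simp add: v_def algebra_simps)
        then have "cmod (v - w) = \<bar>s - 1\<bar> * cmod w" by (simp only: norm_mult norm_of_real)
        then show ?thesis using s1 by simp
      qed
      also have "\<dots> \<le> (1 - s) * \<alpha>" using s1 w by (intro mult_left_mono) auto
      finally have vw: "cmod (v - w) \<le> (1 - s) * \<alpha>" .
      have "(1 - s) * \<alpha> * C' \<le> 1/2"
      proof -
        have "0 \<le> C' * (\<alpha> * 2)" using C'0 a by simp
        then have pos: "0 < 2 + C' * (\<alpha> * 2)" by linarith
        show ?thesis
          using pos unfolding s_def by (simp add: field_simps divide_le_eq_1)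
      qed
      then have "cmod (v - w) * C' \<le> 1/2"
        using vw C'0 by (meson mult_right_mono order_trans)
      then show ?thesis using Nf
        by (metis mult.assoc mult_right_mono less_imp_le)
    qed
    finally show False using Nf by simp
  qed
qed

end
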